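(* Let $C$ be a binary linear $[n,k]$ code whose hull $\mathrm{Hull}(C)=C\cap C^{\perp}$ has dimension $\ell$, where $0\le\ell\le k$. Let $G$ be a $k\times n$ generator matrix of $C$ with rows $\mathbf r_1,\dots,\mathbf r_k$ and $H$ an $(n-k)\times n$ parity check matrix of $C$ with rows $\mathbf s_1,\dots,\mathbf s_{n-k}$. Suppose $\mathbf x=(x_1,\dots,x_n)\in\mathbb F_2^n$ satisfies $\mathbf x\cdot\mathbf x=0$. Put $y_i=\mathbf x\cdot\mathbf r_i$ ($1\le i\le k$) and $z_j=\mathbf x\cdot\mathbf s_j$ ($1\le j\le n-k$). Then: (a) the matrix \[ G_2=\begin{bmatrix} 1 & 1 & x_1\ \cdots\ x_n\\ y_1 & 0 & \mathbf r_1\\ \vdots & \vdots & \vdots\\ y_k & 0 & \mathbf r_k\end{bmatrix} \] generates a binary linear $[n+2,k+1]$ code $C_2$ whose hull has dimension $\ell$, $\ell+1$ or $\ell+2$. More precisely: if $y_i=0$ for all $1\le i\le k$, then the hull of $C_2$ has dimension $\ell+1$; if $y_i\neq 0$ for some $1\le i\le k$, then the hull of $C_2$ has dimension $\ell$, $\ell+1$, or $\ell+2$. (b) the matrix \[ H_2=\begin{bmatrix} 1 & 1 & x_1\ \cdots\ x_n\\ 0 & z_1 & \mathbf s_1\\ \vdots & \vdots & \vdots\\ 0 & z_{n-k} & \mathbf s_{n-k}\end{bmatrix} \] is a parity check matrix for $C_2$.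
   Context: All codes are binary linear codes; the dual is taken with respect to the standard dot product on $\mathbb F_2^n$, and $\mathrm{Hull}(C)=C\cap C^{\perp}$. A parity check matrix of $C$ is a generator matrix of $C^{\perp}$. The case where all $y_i=0$ is called Construction II; the case where some $y_i\ne 0$ is called Construction III. *)

theory Defs
  imports Main "HOL-Library.Z2"
begin

text \<open>Vectors of F_2^n are lists of length n over the two-element field bit.
  A matrix is a list of rows. Linear codes are subsets of F_2^n.\<close>

definition vecs :: "nat \<Rightarrow> bit list set" where
  "vecs n = {v. length v = n}"

definition vzero :: "nat \<Rightarrow> bit list" where
  "vzero n = replicate n 0"

definition vadd :: "bit list \<Rightarrow> bit list \<Rightarrow> bit list" where
  "vadd u v = map2 (+) u v"

definition vsmult :: "bit \<Rightarrow> bit list \<Rightarrow> bit list" where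
  "vsmult c v = map ((*) c) v"

definition dot :: "bit list \<Rightarrow> bit list \<Rightarrow> bit" where
  "dot u v = (\<Sum>i<length u. u ! i * v ! i)"

definition lincomb :: "nat \<Rightarrow> bit list list \<Rightarrow> bit list \<Rightarrow> bit list" where
  "lincomb n rows cs = foldr vadd (map2 vsmult cs rows) (vzero n)"

definition span :: "nat \<Rightarrow> bit list list \<Rightarrow> bit list set" where
  "span n rows = {lincomb n rows cs | cs. length cs = length rows}"

definition linear_code :: "nat \<Rightarrow> bit list set \<Rightarrow> bool" where
  "linear_code n C \<longleftrightarrow> C \<subseteq> vecs n \<and> vzero n \<in> C \<and>
     (\<forall>u\<in>C. \<forall>v\<in>C. vadd u v \<in> C) \<and> (\<forall>c u. u \<in> C \<longrightarrow> vsmult c u \<in> C)"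

definition code_dim :: "nat \<Rightarrow> bit list set \<Rightarrow> nat" where
  "code_dim n C = (LEAST k. \<exists>rows. length rows = k \<and> set rows \<subseteq> vecs n \<and> span n rows = C)"

definition dual :: "nat \<Rightarrow> bit list set \<Rightarrow> bit list set" where
  "dual n C = {v \<in> vecs n. \<forall>c\<in>C. dot v c = 0}"

definition hull :: "nat \<Rightarrow> bit list set \<Rightarrow> bit list set" where
  "hull n C = C \<inter> dual n C"

definition is_code :: "nat \<Rightarrow> nat \<Rightarrow> bit list set \<Rightarrow> bool" where
  "is_code n k C \<longleftrightarrow> linear_code n C \<and> code_dim n C = k"

definition generator_matrix :: "nat \<Rightarrow> nat \<Rightarrow> bit list list \<Rightarrow> bit list set \<Rightarrow> bool" where
  "generator_matrix n k G C \<longleftrightarrow> length G = k \<and> set G \<subseteq> vecs n \<and> span n G = C"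

definition parity_check_matrix :: "nat \<Rightarrow> nat \<Rightarrow> bit list list \<Rightarrow> bit list set \<Rightarrow> bool" where
  "parity_check_matrix n m H C \<longleftrightarrow> generator_matrix n m H (dual n C)"

end

theory Submission
  imports Defs
begin

declare add_bit_eq_xor[simp del] mult_bit_eq_and[simp del]

lemma bit_add_self[simp]: "(a::bit) + a = 0"
  by (cases a) (simp_all add: one_add_one)

lemma bit_add_eq0: "(a::bit) + b = 0 \<longleftrightarrow> a = b"
  by (cases a; cases b) (simp_all add: one_add_one)

lemma bit_add_cancel[simp]: "(a::bit) + (a + b) = b"
  by (metis add.assoc add_0 bit_add_self)

lemma length_vadd[simp]: "length (vadd u v) = min (length u) (length v)"
  by (simp add: vadd_def)
lemma nth_vadd[simp]: "i < length u \<Longrightarrow> i < length v \<Longrightarrow> vadd u v ! i = u ! i + v ! i"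
  by (simp add: vadd_def)
lemma length_vsmult[simp]: "length (vsmult c v) = length v"
  by (simp add: vsmult_def)
lemma nth_vsmult[simp]: "i < length v \<Longrightarrow> vsmult c v ! i = c * v ! i"
  by (simp add: vsmult_def)
lemma length_vzero[simp]: "length (vzero n) = n"
  by (simp add: vzero_def)
lemma nth_vzero[simp]: "i < n \<Longrightarrow> vzero n ! i = 0"
  by (simp add: vzero_def)
lemma vecs_iff[simp]: "v \<in> vecs n \<longleftrightarrow> length v = n"
  by (simp add: vecs_def)

lemma vadd_append: "length a = length c \<Longrightarrow> vadd (a @ b) (c @ d) = vadd a c @ vadd b d"
  by (simp add: vadd_def)
lemma vsmult_append: "vsmult k (a @ b) = vsmult k a @ vsmult k b"
  by (simp add: vsmult_def)
lemma vadd_Cons[simp]: "vadd (a # u) (b # v) = (a + b) # vadd u v"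
  by (simp add: vadd_def)
lemma vsmult_Cons[simp]: "vsmult c (a # u) = (c * a) # vsmult c u"
  by (simp add: vsmult_def)
lemma vadd_Nil[simp]: "vadd [] v = []" "vadd u [] = []"
  by (simp_all add: vadd_def)
lemma vsmult_Nil[simp]: "vsmult c [] = []"
  by (simp add: vsmult_def)

lemma vadd_comm: "vadd u v = vadd v u"
  by (rule nth_equalityI) (auto simp: add.commute)
lemma vadd_assoc: "vadd (vadd u v) w = vadd u (vadd v w)"
  by (rule nth_equalityI) (auto simp: add.assoc)
lemma vadd_zero[simp]: "length u = n \<Longrightarrow> vadd u (vzero n) = u"
  by (rule nth_equalityI) auto
lemma vadd_zero2[simp]: "length u = n \<Longrightarrow> vadd (vzero n) u = u"
  by (rule nth_equalityI) auto
lemma vadd_self[simp]: "vadd u u = vzero (length u)"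
  by (rule nth_equalityI) auto
lemma vadd_cancel[simp]: "length u = length v \<Longrightarrow> vadd u (vadd u v) = v"
  by (rule nth_equalityI) auto
lemma vsmult_1[simp]: "vsmult 1 u = u"
  by (rule nth_equalityI) auto
lemma vsmult_0[simp]: "vsmult 0 u = vzero (length u)"
  by (rule nth_equalityI) auto
lemma vsmult_vzero[simp]: "vsmult c (vzero n) = vzero n"
  by (rule nth_equalityI) auto
lemma vsmult_cases: "vsmult c u = (if c = 1 then u else vzero (length u))"
  by (cases c) auto

lemma dot_Cons[simp]: "dot (a # u) (b # v) = a * b + dot u v"
  unfolding dot_def by (simp only: length_Cons sum.lessThan_Suc_shift) simp
lemma dot_Nil[simp]: "dot [] v = 0"
  unfolding dot_def by simp
lemma dot_append: "length a = length c \<Longrightarrow> dot (a @ b) (c @ d) = dot a c + dot b d"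
  by (induction a c rule: list_induct2) (auto simp: add.assoc)

lemma dot_comm: "length u = length v \<Longrightarrow> dot u v = dot v u"
  by (induction u v rule: list_induct2) (auto simp: mult.commute)
lemma dot_vadd_right: "length u = length v \<Longrightarrow> length u = length w \<Longrightarrow>
   dot u (vadd v w) = dot u v + dot u w"
  unfolding dot_def by (simp add: distrib_left sum.distrib)
lemma dot_vadd_left: "length u = length v \<Longrightarrow> length u = length w \<Longrightarrow>
   dot (vadd v w) u = dot v u + dot w u"
  unfolding dot_def by (simp add: distrib_right sum.distrib)
lemma dot_vsmult_right: "dot u (vsmult c v) = c * dot u v" if "length u = length v"
  using that unfolding dot_def by (simp add: sum_distrib_left algebra_simps)
lemma dot_vsmult_left: "dot (vsmult c v) u = c * dot v u" 
  unfolding dot_def by (simp add: sum_distrib_left algebra_simps)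
lemma dot_vzero_right[simp]: "length u = n \<Longrightarrow> dot u (vzero n) = 0"
  unfolding dot_def by simp
lemma dot_vzero_left[simp]: "dot (vzero n) u = 0"
  unfolding dot_def by simp

lemma lincomb_Nil[simp]: "lincomb n [] cs = vzero n"
  by (simp add: lincomb_def)
lemma lincomb_Cons[simp]: "lincomb n (r # rs) (c # cs) = vadd (vsmult c r) (lincomb n rs cs)"
  by (simp add: lincomb_def)

lemma length_lincomb: "set rows \<subseteq> vecs n \<Longrightarrow> length cs = length rows \<Longrightarrow> length (lincomb n rows cs) = n"
  by (induction rows cs rule: list_induct2') auto

lemma span_Nil[simp]: "span n [] = {vzero n}"
  by (simp add: span_def)

lemma span_Cons: "span n (r # rs) = {vadd (vsmult c r) w | c w. w \<in> span n rs}"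
proof -
  have "span n (r # rs) = {lincomb n (r # rs) cs | cs. length cs = Suc (length rs)}"
    by (simp add: span_def)
  also have "\<dots> = {vadd (vsmult c r) (lincomb n rs cs) | c cs. length cs = length rs}"
    apply (rule set_eqI) apply safe
     apply (case_tac cs) apply auto[1] apply force
    by (metis length_Cons lincomb_Cons)
  finally show ?thesis by (auto simp: span_def)
qed

lemma span_vecs: "set rows \<subseteq> vecs n \<Longrightarrow> span n rows \<subseteq> vecs n"
  by (auto simp: span_def length_lincomb)

lemma span_Cons': assumes "set (r # rs) \<subseteq> vecs n"
  shows "span n (r # rs) = span n rs \<union> vadd r ` span n rs"
proof -
  have S: "span n rs \<subseteq> vecs n" using assms span_vecs by simp
  have "vsmult c r = (if c = 1 then r else vzero n)" for c using assms by (auto simp: vsmult_cases)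
  then show ?thesis unfolding span_Cons using S
    apply (auto simp: image_def)
    subgoal for x apply (rule exI[of _ 0]) by (auto intro!: exI[of _ x])
    done
qed

lemma vec_lin_add: "length r = n \<Longrightarrow> length a = n \<Longrightarrow> length b = n \<Longrightarrow>
  vadd (vadd (vsmult c r) a) (vadd (vsmult d r) b) = vadd (vsmult (c + d) r) (vadd a b)"
  by (rule nth_equalityI) (auto simp: algebra_simps)
lemma vec_lin_smult: "length r = n \<Longrightarrow> length a = n \<Longrightarrow>
  vsmult e (vadd (vsmult c r) a) = vadd (vsmult (e * c) r) (vsmult e a)"
  by (rule nth_equalityI) (auto simp: algebra_simps)

lemma linear_code_span: "set rows \<subseteq> vecs n \<Longrightarrow> linear_code n (span n rows)"
proof (induction rows)
  case Nil
  then show ?case by (auto simp: linear_code_def)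
next
  case (Cons r rs)
  then have IH: "linear_code n (span n rs)" and r: "length r = n" by auto
  have S: "span n rs \<subseteq> vecs n" using Cons span_vecs by simp
  show ?case unfolding linear_code_def
  proof (intro conjI ballI allI impI)
    show "span n (r # rs) \<subseteq> vecs n" using Cons span_vecs by blast
    have "vzero n = vadd (vsmult 0 r) (vzero n)" using r by simp
    moreover have "vzero n \<in> span n rs" using IH by (simp add: linear_code_def)
    ultimately show "vzero n \<in> span n (r # rs)" unfolding span_Cons by blast
    fix u v assume "u \<in> span n (r # rs)" "v \<in> span n (r # rs)"
    then obtain c a d b where u: "u = vadd (vsmult c r) a" "a \<in> span n rs"
      and v: "v = vadd (vsmult d r) b" "b \<in> span n rs" unfolding span_Cons by blast
    have "vadd a b \<in> span n rs" using IH u v by (auto simp: linear_code_def)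
    moreover have "vadd u v = vadd (vsmult (c + d) r) (vadd a b)"
    proof -
      have "length a = n" "length b = n" using S u v by auto
      then show ?thesis unfolding u v using vec_lin_add[OF r] by blast
    qed
    ultimately show "vadd u v \<in> span n (r # rs)" unfolding span_Cons by blast
  next
    fix e u assume "u \<in> span n (r # rs)"
    then obtain c a where u: "u = vadd (vsmult c r) a" "a \<in> span n rs"
      unfolding span_Cons by blast
    have "vsmult e a \<in> span n rs" using IH u by (auto simp: linear_code_def)
    moreover have "vsmult e u = vadd (vsmult (e * c) r) (vsmult e a)"
      unfolding u using vec_lin_smult[OF r] S u by auto
    ultimately show "vsmult e u \<in> span n (r # rs)" unfolding span_Cons by blast
  qed
qed

lemma span_subset: "linear_code n V \<Longrightarrow> set rows \<subseteq> V \<Longrightarrow> span n rows \<subseteq> V"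
proof (induction rows)
  case Nil then show ?case by (auto simp: linear_code_def)
next
  case (Cons r rs)
  then show ?case unfolding span_Cons linear_code_def by auto
qed

lemma set_subset_span: "set rows \<subseteq> vecs n \<Longrightarrow> set rows \<subseteq> span n rows"
proof (induction rows)
  case Nil then show ?case by simp
next
  case (Cons r rs)
  have L: "linear_code n (span n rs)" using Cons linear_code_span by auto
  have S: "span n rs \<subseteq> vecs n" using Cons span_vecs by simp
  have "r \<in> span n (r # rs)" unfolding span_Cons using L Cons.prems
    by (auto simp: linear_code_def intro!: exI[of _ 1] exI[of _ "vzero n"])
  moreover have "set rs \<subseteq> span n (r # rs)" unfolding span_Cons using Cons S
    by (force intro!: exI[of _ 0])
  ultimately show ?case by simp
qed

lemma linear_code_is_span: assumes "linear_code n V"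
  shows "\<exists>rows. set rows \<subseteq> vecs n \<and> span n rows = V"
proof -
  have V: "V \<subseteq> vecs n" using assms by (simp add: linear_code_def)
  have "finite (vecs n)"
  proof -
    have U: "(UNIV :: bit set) = {0, 1}" by (auto intro: bit.exhaust)
    have "vecs n = {xs. set xs \<subseteq> UNIV \<and> length xs = n}" by (auto simp: vecs_def)
    moreover have "finite (UNIV :: bit set)" by (subst U) simp
    ultimately show ?thesis using finite_lists_length_eq[of "UNIV :: bit set" n] by simp
  qed
  then have "finite V" using V finite_subset by blast
  then obtain xs where xs: "set xs = V" using finite_list by blast
  have "span n xs \<subseteq> V" using span_subset[OF assms] xs by simp
  moreover have "V \<subseteq> span n xs" using set_subset_span[of xs n] xs V by simp
  ultimately show ?thesis using xs V by blast
qed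

lemma UNIV_bit: "(UNIV :: bit set) = {0, 1}" by (auto intro: bit.exhaust)

lemma finite_vecs[simp]: "finite (vecs n)"
proof -
  have "vecs n = {xs. set xs \<subseteq> UNIV \<and> length xs = n}" by (auto simp: vecs_def)
  moreover have "finite (UNIV :: bit set)" by (subst UNIV_bit) simp
  ultimately show ?thesis using finite_lists_length_eq[of "UNIV :: bit set" n] by simp
qed

lemma card_vecs: "card (vecs n) = 2 ^ n"
proof -
  have eq: "vecs n = {xs. set xs \<subseteq> UNIV \<and> length xs = n}" by (auto simp: vecs_def)
  have c2: "card (UNIV :: bit set) = 2" by (subst UNIV_bit) simp
  have fin: "finite (UNIV :: bit set)" by (subst UNIV_bit) simp
  have "card {xs. set xs \<subseteq> (UNIV::bit set) \<and> length xs = n} = card (UNIV::bit set) ^ n"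
    by (rule card_lists_length_eq[OF fin])
  then show ?thesis unfolding eq c2 .
qed

lemma vadd_inj: "length a = length r \<Longrightarrow> length b = length r \<Longrightarrow> vadd r a = vadd r b \<Longrightarrow> a = b"
  by (metis vadd_cancel)

lemma card_span_le: "set rows \<subseteq> vecs n \<Longrightarrow> card (span n rows) \<le> 2 ^ length rows"
proof (induction rows)
  case Nil then show ?case by simp
next
  case (Cons r rs)
  have "span n rs \<subseteq> vecs n" using Cons.prems span_vecs[of rs n] by simp
  then have F: "finite (span n rs)" using finite_subset finite_vecs by blast
  have "card (span n (r # rs)) \<le> card (span n rs) + card (vadd r ` span n rs)"
    unfolding span_Cons'[OF Cons.prems] by (rule card_Un_le)
  also have "\<dots> \<le> 2 * card (span n rs)" using card_image_le[OF F, of "vadd r"] by simp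
  also have "\<dots> \<le> 2 ^ length (r # rs)" using Cons by simp
  finally show ?case .
qed

lemma basis_exists: "set rows \<subseteq> vecs n \<Longrightarrow>
  \<exists>rows'. set rows' \<subseteq> vecs n \<and> span n rows' = span n rows \<and> card (span n rows') = 2 ^ length rows'"
proof (induction rows)
  case Nil then show ?case by (intro exI[of _ "[]"]) simp
next
  case (Cons r rs)
  then obtain rs' where rs': "set rs' \<subseteq> vecs n" "span n rs' = span n rs" "card (span n rs') = 2 ^ length rs'"
    by auto
  let ?S = "span n rs"
  have L: "linear_code n ?S" using Cons linear_code_span by simp
  have SV: "?S \<subseteq> vecs n" using Cons span_vecs by simp
  have F: "finite ?S" using SV finite_subset finite_vecs by blast
  have r: "length r = n" using Cons by simp
  show ?case
  proof (cases "r \<in> ?S")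
    case True
    have "vadd r ` ?S \<subseteq> ?S" using L True by (auto simp: linear_code_def)
    then have "span n (r # rs) = ?S" using span_Cons'[OF Cons.prems] by blast
    then show ?thesis using rs' by metis
  next
    case False
    have E: "span n (r # rs') = span n (r # rs)"
      using span_Cons'[OF Cons.prems] span_Cons'[of r rs' n] rs' r by simp
    have D: "?S \<inter> vadd r ` ?S = {}"
    proof (rule ccontr)
      assume "?S \<inter> vadd r ` ?S \<noteq> {}"
      then obtain s where s: "s \<in> ?S" "vadd r s \<in> ?S" by blast
      have ls: "length s = n" using s SV by auto
      have "vadd (vadd r s) s = vadd r (vadd s s)" by (rule vadd_assoc)
      then have "vadd (vadd r s) s = r" using ls r by simp
      then have "r \<in> ?S" using L s by (metis linear_code_def)
      then show False using False by simp
    qed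
    have I: "inj_on (vadd r) ?S"
    proof (rule inj_onI)
      fix a b assume ab: "a \<in> ?S" "b \<in> ?S" and eq: "vadd r a = vadd r b"
      have "a \<in> vecs n" "b \<in> vecs n" using subsetD[OF SV ab(1)] subsetD[OF SV ab(2)] by auto
      then have "length a = length r" "length b = length r" using r by simp_all
      then show "a = b" by (rule vadd_inj[OF _ _ eq])
    qed
    have "card (span n (r # rs)) = card ?S + card (vadd r ` ?S)"
      unfolding span_Cons'[OF Cons.prems] using D F by (simp add: card_Un_disjoint)
    also have "\<dots> = 2 * card ?S" using card_image[OF I] by simp
    finally have "card (span n (r # rs')) = 2 ^ length (r # rs')" using E rs' by simp
    then show ?thesis using E rs' r by (intro exI[of _ "r # rs'"]) simp
  qed
qed

lemma card_span_dim: assumes "set rows \<subseteq> vecs n"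
  shows "card (span n rows) = 2 ^ code_dim n (span n rows)"
proof -
  obtain rows' where rows': "set rows' \<subseteq> vecs n" "span n rows' = span n rows" "card (span n rows') = 2 ^ length rows'"
    using basis_exists[OF assms] by blast
  let ?P = "\<lambda>k. \<exists>rs. length rs = k \<and> set rs \<subseteq> vecs n \<and> span n rs = span n rows"
  have P: "?P (length rows')" using rows' by blast
  have le: "code_dim n (span n rows) \<le> length rows'"
    unfolding code_dim_def using Least_le[of ?P, OF P] by simp
  have "?P (code_dim n (span n rows))" unfolding code_dim_def using LeastI[of ?P, OF P] .
  then obtain rs where rs: "length rs = code_dim n (span n rows)" "set rs \<subseteq> vecs n" "span n rs = span n rows" by blast
  have "2 ^ length rows' \<le> (2::nat) ^ code_dim n (span n rows)"
    using card_span_le[OF rs(2)] rs rows' by simp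
  then have "length rows' \<le> code_dim n (span n rows)" by simp
  then show ?thesis using le rows' by simp
qed

lemma card_linear_code: "linear_code n V \<Longrightarrow> card V = 2 ^ code_dim n V"
  using linear_code_is_span card_span_dim by metis

lemma index2:
  fixes S :: "bit list set" and f :: "bit list \<Rightarrow> bit"
  assumes F: "finite S" and SV: "S \<subseteq> vecs n" and cl: "\<And>u v. u\<in>S \<Longrightarrow> v\<in>S \<Longrightarrow> vadd u v \<in> S"
    and lin: "\<And>u v. u\<in>S \<Longrightarrow> v\<in>S \<Longrightarrow> f (vadd u v) = f u + f v"
  shows "card S \<le> 2 * card {s\<in>S. f s = 0}"
    and "u \<in> S \<Longrightarrow> f u = 1 \<Longrightarrow> card S = 2 * card {s\<in>S. f s = 0}"
proof -
  define S0 where "S0 = {s\<in>S. f s = 0}"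
  define S1 where "S1 = {s\<in>S. f s = 1}"
  have U: "S = S0 \<union> S1" unfolding S0_def S1_def by auto
  have D: "S0 \<inter> S1 = {}" unfolding S0_def S1_def by auto
  have F0: "finite S0" "finite S1" using F unfolding S0_def S1_def by auto
  have C: "card S = card S0 + card S1"
    using card_Un_disjoint[OF F0 D] U by simp
  have key: "card S1 = card S0" if u: "u \<in> S" "f u = 1" for u
  proof -
    have lu: "length u = n" using subsetD[OF SV u(1)] by simp
    have "vadd u ` S0 = S1"
    proof
      show "vadd u ` S0 \<subseteq> S1"
      proof
        fix t assume "t \<in> vadd u ` S0"
        then obtain s where s: "s \<in> S" "f s = 0" "t = vadd u s" unfolding S0_def by blast
        have "vadd u s \<in> S" by (rule cl[OF u(1) s(1)])
        moreover have "f (vadd u s) = 1" using lin[OF u(1) s(1)] u(2) s(2) by simp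
        ultimately show "t \<in> S1" unfolding S1_def s(3) by simp
      qed
      show "S1 \<subseteq> vadd u ` S0"
      proof
        fix t assume t: "t \<in> S1"
        then have tS: "t \<in> S" "f t = 1" unfolding S1_def by simp_all
        have lt: "length t = n" using subsetD[OF SV tS(1)] by simp
        have "vadd u t \<in> S" by (rule cl[OF u(1) tS(1)])
        moreover have "f (vadd u t) = 0" using lin[OF u(1) tS(1)] u(2) tS(2) by simp
        ultimately have "vadd u t \<in> S0" unfolding S0_def by simp
        moreover have "t = vadd u (vadd u t)" using lu lt by simp
        ultimately show "t \<in> vadd u ` S0" by blast
      qed
    qed
    moreover have "inj_on (vadd u) S0"
    proof (rule inj_onI)
      fix a b assume ab: "a \<in> S0" "b \<in> S0" and eq: "vadd u a = vadd u b"
      have aS: "a \<in> S" "b \<in> S" using ab unfolding S0_def by simp_all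
      have "length a = length u" "length b = length u"
        using subsetD[OF SV aS(1)] subsetD[OF SV aS(2)] lu by simp_all
      then show "a = b" by (rule vadd_inj[OF _ _ eq])
    qed
    ultimately show ?thesis by (metis card_image)
  qed
  show "card S \<le> 2 * card {s\<in>S. f s = 0}"
  proof (cases "S1 = {}")
    case True then show ?thesis using C unfolding S0_def by simp
  next
    case False
    then obtain u where "u \<in> S1" by blast
    then have "u \<in> S" "f u = 1" unfolding S1_def by simp_all
    then show ?thesis using C key unfolding S0_def by simp
  qed
  show "u \<in> S \<Longrightarrow> f u = 1 \<Longrightarrow> card S = 2 * card {s\<in>S. f s = 0}" using C key unfolding S0_def by simp
qed

lemma dot_vadd_left': "length v = length u \<Longrightarrow> length w = length u \<Longrightarrow>
   dot (vadd v w) u = dot v u + dot w u"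
  unfolding dot_def by (simp add: distrib_right sum.distrib)

lemma orth_linear: assumes "length u = m"
  shows "linear_code m {w \<in> vecs m. dot u w = 0}"
  unfolding linear_code_def using assms
  by (auto simp: dot_vadd_right dot_vsmult_right)

lemma dual_linear: assumes "V \<subseteq> vecs m" shows "linear_code m (dual m V)"
  unfolding linear_code_def dual_def
proof (intro conjI ballI allI impI)
  fix u v assume u: "u \<in> {v \<in> vecs m. \<forall>c\<in>V. dot v c = 0}" and v: "v \<in> {v \<in> vecs m. \<forall>c\<in>V. dot v c = 0}"
  show "vadd u v \<in> {v \<in> vecs m. \<forall>c\<in>V. dot v c = 0}"
  proof (simp, intro conjI ballI)
    show "min (length u) (length v) = m" using u v by simp
    fix c assume c: "c \<in> V"
    have "length c = m" using c assms by auto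
    then show "dot (vadd u v) c = 0" using u v c dot_vadd_left'[of u c v] by simp
  qed
next
  fix e u assume u: "u \<in> {v \<in> vecs m. \<forall>c\<in>V. dot v c = 0}"
  then show "vsmult e u \<in> {v \<in> vecs m. \<forall>c\<in>V. dot v c = 0}" by (simp add: dot_vsmult_left)
qed auto

lemma linear_code_Int: "linear_code n A \<Longrightarrow> linear_code n B \<Longrightarrow> linear_code n (A \<inter> B)"
  unfolding linear_code_def by auto

lemma span_map:
  assumes rows: "set rows \<subseteq> vecs n"
    and len: "\<And>v. v \<in> vecs n \<Longrightarrow> length (f v) = m"
    and z: "f (vzero n) = vzero m"
    and lin: "\<And>c r w. r \<in> vecs n \<Longrightarrow> w \<in> vecs n \<Longrightarrow> f (vadd (vsmult c r) w) = vadd (vsmult c (f r)) (f w)"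
  shows "span m (map f rows) = f ` span n rows"
  using rows
proof (induction rows)
  case Nil then show ?case using z by simp
next
  case (Cons r rs)
  then have IH: "span m (map f rs) = f ` span n rs" and r: "r \<in> vecs n" by auto
  have S: "span n rs \<subseteq> vecs n" using Cons span_vecs by simp
  have "span m (map f (r # rs)) = {vadd (vsmult c (f r)) w | c w. w \<in> f ` span n rs}"
    by (simp add: span_Cons IH)
  also have "\<dots> = {f (vadd (vsmult c r) w) | c w. w \<in> span n rs}"
  proof (rule set_eqI, rule iffI)
    fix v assume "v \<in> {vadd (vsmult c (f r)) w | c w. w \<in> f ` span n rs}"
    then obtain c w where v: "v = vadd (vsmult c (f r)) (f w)" "w \<in> span n rs" by blast
    have "v = f (vadd (vsmult c r) w)" using v lin[OF r, of w c] subsetD[OF S v(2)] by simp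
    then show "v \<in> {f (vadd (vsmult c r) w) | c w. w \<in> span n rs}" using v(2) by blast
  next
    fix v assume "v \<in> {f (vadd (vsmult c r) w) | c w. w \<in> span n rs}"
    then obtain c w where v: "v = f (vadd (vsmult c r) w)" "w \<in> span n rs" by blast
    have "v = vadd (vsmult c (f r)) (f w)" using v lin[OF r, of w c] subsetD[OF S v(2)] by simp
    then show "v \<in> {vadd (vsmult c (f r)) w | c w. w \<in> f ` span n rs}" using v(2) by blast
  qed
  also have "\<dots> = f ` span n (r # rs)" by (auto simp: span_Cons)
  finally show ?case .
qed

definition psi :: "bit list \<Rightarrow> bit list \<Rightarrow> bit list" where "psi x r = [dot x r, 0] @ r"
definition chi :: "bit list \<Rightarrow> bit list \<Rightarrow> bit list" where "chi x s = [0, dot x s] @ s"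

lemma psi_len[simp]: "length (psi x r) = length r + 2" by (simp add: psi_def)
lemma chi_len[simp]: "length (chi x r) = length r + 2" by (simp add: chi_def)

lemma dot_lin_right: "length x = n \<Longrightarrow> length r = n \<Longrightarrow> length w = n \<Longrightarrow>
  dot x (vadd (vsmult c r) w) = c * dot x r + dot x w"
  by (simp add: dot_vadd_right dot_vsmult_right)

lemma psi_lin: "length x = n \<Longrightarrow> r \<in> vecs n \<Longrightarrow> w \<in> vecs n \<Longrightarrow>
  psi x (vadd (vsmult c r) w) = vadd (vsmult c (psi x r)) (psi x w)"
  by (simp add: psi_def dot_lin_right vadd_append vsmult_append)
lemma chi_lin: "length x = n \<Longrightarrow> r \<in> vecs n \<Longrightarrow> w \<in> vecs n \<Longrightarrow>
  chi x (vadd (vsmult c r) w) = vadd (vsmult c (chi x r)) (chi x w)"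
  by (simp add: chi_def dot_lin_right vadd_append vsmult_append)
lemma vzero_Suc: "vzero (Suc n) = 0 # vzero n" by (simp add: vzero_def)
lemma psi_zero: "length x = n \<Longrightarrow> psi x (vzero n) = vzero (n + 2)"
  by (simp add: psi_def vzero_Suc)
lemma chi_zero: "length x = n \<Longrightarrow> chi x (vzero n) = vzero (n + 2)"
  by (simp add: chi_def vzero_Suc)

lemma dot_psi_psi: "length c = length c' \<Longrightarrow>
  dot (psi x c) (psi x c') = dot x c * dot x c' + dot c c'"
  by (simp add: psi_def)
lemma dot_v0_psi: "length c = length x \<Longrightarrow> dot ([1, 1] @ x) (psi x c) = 0"
  by (simp add: psi_def)
lemma dot_v0_v0: "dot x x = 0 \<Longrightarrow> dot ([1, 1] @ x) ([1, 1] @ x) = 0"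
  by simp
lemma dot_chi_v0: "length s = length x \<Longrightarrow> dot (chi x s) ([1, 1] @ x) = 0"
  by (simp add: chi_def dot_comm)
lemma dot_chi_psi: "dot (chi x s) (psi x c) = dot s c"
  by (simp add: chi_def psi_def)
lemma psi_nth1[simp]: "psi x c ! 1 = 0" by (simp add: psi_def)
lemma v0_psi_nth1: "vadd ([1, 1] @ x) (psi x c) ! 1 = 1" by (simp add: psi_def)
lemma psi_inj: "psi x a = psi x b \<Longrightarrow> a = b" by (simp add: psi_def)



theorem theorem2:
  fixes n k l :: nat and C :: "bit list set" and G H :: "bit list list" and x :: "bit list"
  assumes "is_code n k C"
    and "code_dim n (hull n C) = l"
    and "l \<le> k"
    and "generator_matrix n k G C"
    and "parity_check_matrix n (n - k) H C"
    and "x \<in> vecs n"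
    and "dot x x = 0"
  defines "G2 \<equiv> ([1, 1] @ x) # map (\<lambda>r. [dot x r, 0] @ r) G"
    and "H2 \<equiv> ([1, 1] @ x) # map (\<lambda>s. [0, dot x s] @ s) H"
    and "C2 \<equiv> span (n + 2) (([1, 1] @ x) # map (\<lambda>r. [dot x r, 0] @ r) G)"
  shows "is_code (n + 2) (k + 1) C2
      \<and> generator_matrix (n + 2) (k + 1) G2 C2
      \<and> code_dim (n + 2) (hull (n + 2) C2) \<in> {l, l + 1, l + 2}
      \<and> ((\<forall>i<k. dot x (G ! i) = 0) \<longrightarrow> code_dim (n + 2) (hull (n + 2) C2) = l + 1)
      \<and> ((\<exists>i<k. dot x (G ! i) \<noteq> 0) \<longrightarrow> code_dim (n + 2) (hull (n + 2) C2) \<in> {l, l + 1, l + 2})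
      \<and> parity_check_matrix (n + 2) ((n + 2) - (k + 1)) H2 C2"
proof -
  define v0 where "v0 = [1, 1] @ x"
  define P where "P = psi x ` C"
  have lx: "length x = n" using assms(6) by simp
  have Clin: "linear_code n C" and dimC: "code_dim n C = k" using assms(1) by (auto simp: is_code_def)
  have CV: "C \<subseteq> vecs n" using Clin by (simp add: linear_code_def)
  have G: "length G = k" "set G \<subseteq> vecs n" "span n G = C" using assms(4) by (auto simp: generator_matrix_def)
  have H: "length H = n - k" "set H \<subseteq> vecs n" "span n H = dual n C"
    using assms(5) by (auto simp: generator_matrix_def parity_check_matrix_def)
  have cardC: "card C = 2 ^ k" using card_linear_code[OF Clin] dimC by simp
  have "card C \<le> card (vecs n)" by (rule card_mono[OF finite_vecs CV])
  then have "(2::nat) ^ k \<le> 2 ^ n" using cardC card_vecs by simp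
  then have kn: "k \<le> n" by simp
  have GC: "set G \<subseteq> C" using set_subset_span[OF G(2)] G(3) by simp
  have G2eq: "G2 = v0 # map (psi x) G" unfolding G2_def v0_def psi_def by simp
  have C2eq: "C2 = span (n + 2) (v0 # map (psi x) G)" unfolding C2_def v0_def psi_def by simp
  have H2eq: "H2 = v0 # map (chi x) H" unfolding H2_def v0_def chi_def by simp
  have v0V: "v0 \<in> vecs (n + 2)" using lx by (simp add: v0_def)
  have rowsV: "set (v0 # map (psi x) G) \<subseteq> vecs (n + 2)" using v0V G(2) by auto
  have spanP: "span (n + 2) (map (psi x) G) = P"
    unfolding P_def G(3)[symmetric]
    by (rule span_map[OF G(2)]) (use lx psi_zero psi_lin in auto)
  have C2P: "C2 = P \<union> vadd v0 ` P" using span_Cons'[OF rowsV] spanP C2eq by simp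
  have C2lin: "linear_code (n + 2) C2" using C2eq linear_code_span[OF rowsV] by simp
  have C2V: "C2 \<subseteq> vecs (n + 2)" using C2lin by (simp add: linear_code_def)
  have finC2: "finite C2" using C2V finite_subset finite_vecs by blast
  have v0C2: "v0 \<in> C2" using set_subset_span[OF rowsV] C2eq by simp
  have PC2: "P \<subseteq> C2" using C2P by blast
  have PV: "P \<subseteq> vecs (n + 2)" using CV unfolding P_def by auto
  have v0P: "w \<in> P \<Longrightarrow> vadd v0 w ! 1 = 1" for w unfolding P_def v0_def using v0_psi_nth1 by auto
  have P1: "w \<in> P \<Longrightarrow> w ! 1 = 0" for w unfolding P_def psi_def by auto
  have lin1: "\<And>u v. u \<in> C2 \<Longrightarrow> v \<in> C2 \<Longrightarrow> vadd u v ! 1 = u ! 1 + v ! 1"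
    using C2V by (auto simp: subset_iff)
  have cl2: "\<And>u v. u \<in> C2 \<Longrightarrow> v \<in> C2 \<Longrightarrow> vadd u v \<in> C2"
    using C2lin by (simp add: linear_code_def)
  have C20: "{w \<in> C2. w ! 1 = 0} = P"
    using C2P v0P P1 by auto
  have cardP: "card P = card C" unfolding P_def
    by (rule card_image) (auto intro: inj_onI psi_inj)
  have "v0 ! 1 = 1" by (simp add: v0_def)
  then have "card C2 = 2 * card {w \<in> C2. w ! 1 = 0}"
    using index2(2)[OF finC2 C2V cl2 lin1 v0C2] by simp
  then have cardC2: "card C2 = 2 ^ (k + 1)" using C20 cardP cardC by simp
  then have dimC2: "code_dim (n + 2) C2 = k + 1"
    using card_linear_code[OF C2lin] by (metis power_inject_exp one_less_numeral_iff semiring_norm(76))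
  have O1: "C2 \<subseteq> {w \<in> vecs (n + 2). dot v0 w = 0}"
    unfolding C2eq
  proof (rule span_subset[OF orth_linear])
    show "length v0 = n + 2" using v0V by simp
    show "set (v0 # map (psi x) G) \<subseteq> {w \<in> vecs (n + 2). dot v0 w = 0}"
      using rowsV dot_v0_v0[OF assms(7)] dot_v0_psi[of _ x] G(2) lx unfolding v0_def by auto
  qed
  have O2: "C2 \<subseteq> {w \<in> vecs (n + 2). dot (chi x s) w = 0}" if s: "s \<in> dual n C" for s
    unfolding C2eq
  proof (rule span_subset[OF orth_linear])
    have ls: "length s = n" using s by (simp add: dual_def)
    then show "length (chi x s) = n + 2" by simp
    have "dot (chi x s) (psi x r) = 0" if "r \<in> set G" for r
      using dot_chi_psi[of x s r] s GC that by (auto simp: dual_def)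
    then show "set (v0 # map (psi x) G) \<subseteq> {w \<in> vecs (n + 2). dot (chi x s) w = 0}"
      using rowsV dot_chi_v0[of s x] ls lx unfolding v0_def by auto
  qed
  have dualC2lin: "linear_code (n + 2) (dual (n + 2) C2)" by (rule dual_linear[OF C2V])
  have Hdual: "set H \<subseteq> dual n C" using set_subset_span[OF H(2)] H(3) by simp
  have H2V: "set (v0 # map (chi x) H) \<subseteq> vecs (n + 2)" using v0V H(2) by auto
  have H2sub: "span (n + 2) H2 \<subseteq> dual (n + 2) C2"
    unfolding H2eq
  proof (rule span_subset[OF dualC2lin])
    have "v0 \<in> dual (n + 2) C2" using O1 v0V by (auto simp: dual_def)
    moreover have "chi x s \<in> dual (n + 2) C2" if "s \<in> set H" for s
      using O2[of s] Hdual that H(2) by (auto simp: dual_def)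
    ultimately show "set (v0 # map (chi x) H) \<subseteq> dual (n + 2) C2" by auto
  qed
  define Q where "Q = span (n + 2) (map (chi x) H)"
  have spanQ: "Q = chi x ` span n H"
    unfolding Q_def
    by (rule span_map[OF H(2)]) (use lx chi_zero chi_lin in auto)
  have H2Q: "span (n + 2) H2 = Q \<union> vadd v0 ` Q" using span_Cons'[OF H2V] H2eq Q_def by simp
  have H2sup: "dual (n + 2) C2 \<subseteq> span (n + 2) H2"
  proof
    fix v assume v: "v \<in> dual (n + 2) C2"
    then have lv: "length v = n + 2" by (simp add: dual_def)
    then obtain a b w where vab: "v = a # b # w" and lw: "length w = n"
      by (cases v; cases "tl v") auto
    have "dot v v0 = 0" using v v0C2 by (simp add: dual_def)
    then have e1: "a + b + dot w x = 0" by (simp add: vab v0_def add.assoc)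
    have e2: "a * dot x c + dot w c = 0" if c: "c \<in> C" for c
    proof -
      have "psi x c \<in> C2" using PC2 c unfolding P_def by auto
      then have "dot v (psi x c) = 0" using v by (simp add: dual_def)
      then show ?thesis by (simp add: vab psi_def)
    qed
    define w' where "w' = vadd w (vsmult a x)"
    have lw': "length w' = n" using lw lx by (simp add: w'_def)
    have "w' \<in> dual n C"
    proof -
      have "dot w' c = 0" if c: "c \<in> C" for c
      proof -
        have lc: "length c = n" using c CV by auto
        have "dot w' c = dot w c + a * dot x c"
          unfolding w'_def using lw lx lc by (simp add: dot_vadd_left' dot_vsmult_left)
        then show ?thesis using e2[OF c] by (simp add: add.commute)
      qed
      then show ?thesis using lw' by (simp add: dual_def)
    qed
    then have "chi x w' \<in> Q" using spanQ H(3) by simp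
    moreover have "v = chi x w' \<or> v = vadd v0 (chi x w')"
    proof (cases a)
      case zero
      then have "w' = w" using lw lx by (simp add: w'_def)
      moreover have "b = dot x w" using e1 zero lw lx by (simp add: dot_comm bit_add_eq0)
      ultimately show ?thesis using zero by (simp add: vab chi_def)
    next
      case one
      then have w'eq: "w' = vadd w x" by (simp add: w'_def)
      have "vadd x w' = w" unfolding w'eq by (rule nth_equalityI) (use lw lx in auto)
      moreover have "dot x w' = dot x w" unfolding w'eq using lw lx assms(7) by (simp add: dot_vadd_right)
      moreover have "b = 1 + dot x w"
      proof -
        have "1 + b = dot w x" using e1 one by (simp add: bit_add_eq0)
        then have "b = 1 + dot w x" by (metis bit_add_cancel)
        then show ?thesis using lw lx by (simp add: dot_comm)
      qed
      ultimately show ?thesis using one by (simp add: vab chi_def v0_def)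
    qed
    ultimately show "v \<in> span (n + 2) H2" using H2Q by auto
  qed
  have parity: "parity_check_matrix (n + 2) ((n + 2) - (k + 1)) H2 C2"
    unfolding parity_check_matrix_def generator_matrix_def
    using H2sub H2sup H2V H2eq H(1) kn by auto
  define T where "T = hull (n + 2) C2"
  have Tlin: "linear_code (n + 2) T" unfolding T_def hull_def by (rule linear_code_Int[OF C2lin dualC2lin])
  have TV: "T \<subseteq> vecs (n + 2)" using Tlin by (simp add: linear_code_def)
  have finT: "finite T" using TV finite_subset finite_vecs by blast
  have v0T: "v0 \<in> T" using v0C2 O1 v0V unfolding T_def hull_def dual_def by auto
  have clT: "\<And>u v. u \<in> T \<Longrightarrow> v \<in> T \<Longrightarrow> vadd u v \<in> T" using Tlin by (simp add: linear_code_def)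
  have linT: "\<And>u v. u \<in> T \<Longrightarrow> v \<in> T \<Longrightarrow> vadd u v ! 1 = u ! 1 + v ! 1"
    using TV by (auto simp: subset_iff)
  have cardT: "card T = 2 * card {t \<in> T. t ! 1 = 0}"
    using index2(2)[OF finT TV clT linT v0T] \<open>v0 ! 1 = 1\<close> by simp
  define K where "K = {c \<in> C. \<forall>c'\<in>C. dot x c * dot x c' + dot c c' = 0}"
  have T0eq: "{t \<in> T. t ! 1 = 0} = psi x ` K"
  proof
    show "{t \<in> T. t ! 1 = 0} \<subseteq> psi x ` K"
    proof
      fix t assume t: "t \<in> {t \<in> T. t ! 1 = 0}"
      then have tC2: "t \<in> C2" and tD: "t \<in> dual (n + 2) C2" and t1: "t ! 1 = 0"
        unfolding T_def hull_def by auto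
      have "t \<in> P"
      proof (rule ccontr)
        assume "t \<notin> P"
        then have "t \<in> vadd v0 ` P" using tC2 C2P by blast
        then show False using v0P t1 by auto
      qed
      then obtain c where c: "c \<in> C" "t = psi x c" unfolding P_def by blast
      have lc: "length c = n" using c CV by auto
      have "dot x c * dot x c' + dot c c' = 0" if c': "c' \<in> C" for c'
      proof -
        have "psi x c' \<in> C2" using PC2 c' unfolding P_def by auto
        then have "dot t (psi x c') = 0" using tD by (simp add: dual_def)
        moreover have "length c' = n" using c' CV by auto
        ultimately show ?thesis using c lc dot_psi_psi[of c c' x] by simp
      qed
      then have "c \<in> K" using c unfolding K_def by auto
      then show "t \<in> psi x ` K" using c by blast
    qed
    show "psi x ` K \<subseteq> {t \<in> T. t ! 1 = 0}"
    proof
      fix t assume "t \<in> psi x ` K"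
      then obtain c where c: "c \<in> C" "t = psi x c" and cK: "\<forall>c'\<in>C. dot x c * dot x c' + dot c c' = 0"
        unfolding K_def by blast
      have lc: "length c = n" using c CV by auto
      have tC2: "t \<in> C2" using PC2 c unfolding P_def by auto
      have pp: "dot t (psi x c') = 0" if c': "c' \<in> C" for c'
      proof -
        have "length c' = n" using c' CV by auto
        then show ?thesis using c lc dot_psi_psi[of c c' x] cK c' by simp
      qed
      have "dot t w = 0" if w: "w \<in> C2" for w
      proof -
        have "w \<in> P \<or> w \<in> vadd v0 ` P" using w C2P by blast
        then show ?thesis
        proof
          assume "w \<in> P" then show ?thesis using pp unfolding P_def by auto
        next
          assume "w \<in> vadd v0 ` P"
          then obtain c' where c': "c' \<in> C" "w = vadd v0 (psi x c')" unfolding P_def by blast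
          have lc': "length c' = n" using c' CV by auto
          have "dot t w = dot t v0 + dot t (psi x c')"
            unfolding c'(2) using lc lc' lx c(2) by (simp add: dot_vadd_right v0_def)
          moreover have "dot t v0 = 0"
            using c(2) lc lx dot_v0_psi[of c x] dot_comm[of t v0] by (simp add: v0_def)
          ultimately show ?thesis using pp[OF c'(1)] by simp
        qed
      qed
      moreover have "t ! 1 = 0" using c by (simp add: psi_def)
      ultimately show "t \<in> {t \<in> T. t ! 1 = 0}"
        using tC2 c lc unfolding T_def hull_def dual_def by auto
    qed
  qed
  have cardT0: "card {t \<in> T. t ! 1 = 0} = card K" unfolding T0eq
    by (rule card_image) (auto intro: inj_onI psi_inj)
  have KV: "K \<subseteq> vecs n" using CV unfolding K_def by auto
  have finK: "finite K" using KV finite_subset finite_vecs by blast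
  have linK: "\<And>u v. u \<in> K \<Longrightarrow> v \<in> K \<Longrightarrow> dot x (vadd u v) = dot x u + dot x v"
    using KV lx by (auto simp: subset_iff dot_vadd_right)
  have clK: "vadd u v \<in> K" if u: "u \<in> K" and v: "v \<in> K" for u v
  proof -
    have uC: "u \<in> C" and vC: "v \<in> C" using u v unfolding K_def by auto
    have lu: "length u = n" and lv: "length v = n" using uC vC CV by auto
    have "vadd u v \<in> C" using uC vC Clin by (simp add: linear_code_def)
    moreover have "dot x (vadd u v) * dot x c' + dot (vadd u v) c' = 0" if c': "c' \<in> C" for c'
    proof -
      have lc': "length c' = n" using c' CV by auto
      have "dot x (vadd u v) * dot x c' + dot (vadd u v) c'
          = (dot x u * dot x c' + dot u c') + (dot x v * dot x c' + dot v c')"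
        using lu lv lc' lx by (simp add: dot_vadd_right dot_vadd_left' distrib_right add_ac)
      then show ?thesis using u v c' unfolding K_def by simp
    qed
    ultimately show ?thesis unfolding K_def by simp
  qed
  define HC where "HC = hull n C"
  define H0 where "H0 = {c \<in> HC. dot x c = 0}"
  have HClin: "linear_code n HC" unfolding HC_def hull_def
    by (rule linear_code_Int[OF Clin dual_linear[OF CV]])
  have cardHC: "card HC = 2 ^ l" using card_linear_code[OF HClin] assms(2) HC_def by simp
  have HCV: "HC \<subseteq> vecs n" using HClin by (simp add: linear_code_def)
  have finHC: "finite HC" using HCV finite_subset finite_vecs by blast
  have K0eq: "{c \<in> K. dot x c = 0} = H0"
    unfolding K_def H0_def HC_def hull_def dual_def using CV by auto
  have i1: "card K \<le> 2 * card H0"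
    using index2(1)[OF finK KV clK linK] K0eq by simp
  have i2: "card H0 \<le> card K" unfolding K0eq[symmetric] by (rule card_mono[OF finK]) auto
  have i3: "card HC \<le> 2 * card H0" unfolding H0_def
    by (rule index2(1)[OF finHC HCV]) (use HClin HCV lx in \<open>auto simp: linear_code_def subset_iff dot_vadd_right\<close>)
  have i4: "card H0 \<le> card HC" unfolding H0_def by (rule card_mono[OF finHC]) auto
  define d where "d = code_dim (n + 2) T"
  have cT: "card T = 2 ^ d" using card_linear_code[OF Tlin] d_def by simp
  have TK: "card T = 2 * card K" using cardT cardT0 by simp
  have "(2::nat) ^ l \<le> 2 ^ d" using i2 i3 cardHC cT TK by linarith
  then have dl: "l \<le> d" by simp
  have "(2::nat) ^ d \<le> 2 ^ (l + 2)" using i1 i4 cardHC cT TK by simp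
  then have du: "d \<le> l + 2" by (metis one_less_numeral_iff power_increasing_iff semiring_norm(76))
  have dset: "d \<in> {l, l + 1, l + 2}" using dl du by auto
  have y0: "d = l + 1" if y: "\<forall>i<k. dot x (G ! i) = 0"
  proof -
    have "set G \<subseteq> {w \<in> vecs n. dot x w = 0}"
      using y G(1) G(2) by (auto simp: in_set_conv_nth)
    then have "C \<subseteq> {w \<in> vecs n. dot x w = 0}"
      using span_subset[OF orth_linear[OF lx]] G(3) by blast
    then have "K = HC" unfolding K_def HC_def hull_def dual_def using CV by auto
    then have "(2::nat) ^ d = 2 ^ (l + 1)" using cT TK cardHC by simp
    then show ?thesis by (metis one_less_numeral_iff power_inject_exp semiring_norm(76))
  qed
  have isc: "is_code (n + 2) (k + 1) C2" unfolding is_code_def using C2lin dimC2 by simp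
  have gen: "generator_matrix (n + 2) (k + 1) G2 C2"
    unfolding generator_matrix_def using G2eq C2eq rowsV G(1) by simp
  show ?thesis using isc gen dset y0 parity unfolding d_def T_def by blast
qed

end
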